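(* Let $C\subset\mathbb{R}^d$ be a smooth centrally symmetric convex body and let $(G,p)$ be a framework in $\mathbb{R}^d$ that is regular with respect to $\|\cdot\|_C$. Then $(G,p)$ is constant with respect to $\|\cdot\|_C$.
   Context: A centrally symmetric convex body $C$ (compact, convex, non-empty interior, $C=-C$) defines the norm $\|x\|_C=\inf\{\lambda>0:x\in\lambda C\}$; $C$ is smooth if every boundary point has a unique supporting hyperplane. A framework $(G,p)$ is a finite simple graph $G=(V,E)$ with $p=(p_v)_{v\in V}\in\mathbb{R}^{d|V|}$. It is well-positioned if $p_v\ne p_w$ for all $vw\in E$ and $f_{G,C}:q\mapsto(\tfrac12\|q_v-q_w\|_C^2)_{vw\in E}$ is differentiable at $p$; then the rigidity matrix $R_C(G,p)$ is the derivative of $f_{G,C}$ at $p$ (row $vw$ has $\varphi_C(p_v-p_w)$ in the $v$ columns, $\varphi_C(p_w-p_v)$ in the $w$ columns, zeros elsewhere, where $\varphi_C(x)$ is the derivative of $\tfrac12\|\cdot\|_C^2$ at $x$). $(G,p)$ is regular if it is well-positioned and $\operatorname{rank}R_C(G,p)\ge\operatorname{rank}R_C(G,q)$ for every well-positioned placement $q$ of $G$. $(G,p)$ is constant if there is a neighbourhood $U$ of $p$ in $\mathbb{R}^{d|V|}$ such that every $q\in U$ gives a well-positioned $(G,q)$ with $\operatorname{rank}R_C(G,q)=\operatorname{rank}R_C(G,p)$. *)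

theory Defs
  imports "HOL-Analysis.Analysis"
begin

definition cs_convex_body :: "'a::euclidean_space set \<Rightarrow> bool" where
  "cs_convex_body C \<longleftrightarrow> compact C \<and> convex C \<and> interior C \<noteq> {} \<and> uminus ` C = C"

definition normC :: "'a::euclidean_space set \<Rightarrow> 'a \<Rightarrow> real" where
  "normC C x = Inf {t. t > 0 \<and> x \<in> (\<lambda>y. t *\<^sub>R y) ` C}"

definition supporting_hyperplane :: "'a::euclidean_space set \<Rightarrow> 'a \<Rightarrow> 'a set \<Rightarrow> bool" where
  "supporting_hyperplane C x H \<longleftrightarrow>
     (\<exists>a b. a \<noteq> 0 \<and> H = {y. inner a y = b} \<and> x \<in> H \<and> (\<forall>y\<in>C. inner a y \<le> b))"

definition smooth_body :: "'a::euclidean_space set \<Rightarrow> bool" where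
  "smooth_body C \<longleftrightarrow> (\<forall>x\<in>frontier C. \<exists>!H. supporting_hyperplane C x H)"

definition simple_graph :: "('v \<times> 'v) set \<Rightarrow> bool" where
  "simple_graph E \<longleftrightarrow> (\<forall>v. (v, v) \<notin> E) \<and> (\<forall>v w. (v, w) \<in> E \<longrightarrow> (w, v) \<in> E)"

definition edge_fun :: "'a::euclidean_space set \<Rightarrow> ('v::finite \<times> 'v) set \<Rightarrow> 'a ^ 'v \<Rightarrow> real ^ ('v \<times> 'v)" where
  "edge_fun C E q = (\<chi> e. if e \<in> E then (normC C (q $ fst e - q $ snd e))\<^sup>2 / 2 else 0)"

definition well_positioned :: "'a::euclidean_space set \<Rightarrow> ('v::finite \<times> 'v) set \<Rightarrow> 'a ^ 'v \<Rightarrow> bool" where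
  "well_positioned C E p \<longleftrightarrow>
     (\<forall>v w. (v, w) \<in> E \<longrightarrow> p $ v \<noteq> p $ w) \<and> edge_fun C E differentiable (at p)"

text \<open>Rank of the rigidity matrix = rank of the derivative of f_{G,C} at p.\<close>
definition rigidity_rank :: "'a::euclidean_space set \<Rightarrow> ('v::finite \<times> 'v) set \<Rightarrow> 'a ^ 'v \<Rightarrow> nat" where
  "rigidity_rank C E p = dim (range (frechet_derivative (edge_fun C E) (at p)))"

definition regular_fw :: "'a::euclidean_space set \<Rightarrow> ('v::finite \<times> 'v) set \<Rightarrow> 'a ^ 'v \<Rightarrow> bool" where
  "regular_fw C E p \<longleftrightarrow> well_positioned C E p \<and>
     (\<forall>q. well_positioned C E q \<longrightarrow> rigidity_rank C E q \<le> rigidity_rank C E p)"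

definition constant_fw :: "'a::euclidean_space set \<Rightarrow> ('v::finite \<times> 'v) set \<Rightarrow> 'a ^ 'v \<Rightarrow> bool" where
  "constant_fw C E p \<longleftrightarrow> (\<exists>U. open U \<and> p \<in> U \<and>
     (\<forall>q\<in>U. well_positioned C E q \<and> rigidity_rank C E q = rigidity_rank C E p))"

end

theory Submission
  imports Defs
begin


locale csb =
  fixes C :: "'a::euclidean_space set"
  assumes body: "cs_convex_body C"
begin

lemma cvx: "convex C" and cpt: "compact C" and clo: "closed C"
  using body unfolding cs_convex_body_def
  by (auto simp: compact_imp_closed)

lemma symm: assumes "x \<in> C" shows "- x \<in> C"
proof -
  have eq: "uminus ` C = C" using body unfolding cs_convex_body_def by blast
  have "-x \<in> uminus ` C" using assms by blast
  then show ?thesis using eq by simp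
qed

lemma ex_r: "\<exists>r>0. cball 0 r \<subseteq> C"
proof -
  from body obtain x where "x \<in> interior C" unfolding cs_convex_body_def by auto
  then obtain e where e: "e > 0" "ball x e \<subseteq> C" by (meson mem_interior)
  have "ball (-x) e \<subseteq> C"
  proof
    fix y assume "y \<in> ball (-x) e"
    then have "-y \<in> ball x e" by (metis dist_minus minus_minus mem_ball)
    then show "y \<in> C" using e symm by fastforce
  qed
  have "ball 0 e \<subseteq> C"
  proof
    fix y :: 'a assume y: "y \<in> ball 0 e"
    have a: "x + y \<in> C" using y e by (auto simp: dist_norm intro!: subsetD[OF e(2)])
    have b: "-x + y \<in> C" using y \<open>ball (-x) e \<subseteq> C\<close> by (auto simp: dist_norm intro!: subsetD[OF \<open>ball (-x) e \<subseteq> C\<close>])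
    have "(1/2) *\<^sub>R (x + y) + (1/2) *\<^sub>R (-x + y) \<in> C"
      using convexD[OF cvx a b, of "1/2" "1/2"] by simp
    moreover have "(1/2) *\<^sub>R (x + y) + (1/2) *\<^sub>R (-x + y) = y"
    proof -
      have "(1/2) *\<^sub>R (x + y) + (1/2) *\<^sub>R (-x + y :: 'a) = (1/2) *\<^sub>R ((x + y) + (-x + y))"
        by (simp only: scaleR_add_right)
      also have "(x + y) + (-x + y) = 2 *\<^sub>R y" by (simp add: scaleR_2)
      finally show ?thesis by simp
    qed
    ultimately show "y \<in> C" by simp
  qed
  then show ?thesis using e by (intro exI[of _ "e/2"]) auto
qed

lemma ex_R: "\<exists>R>0. C \<subseteq> cball 0 R"
proof -
  have "bounded C" using cpt compact_imp_bounded by auto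
  then obtain R where "R > 0" "\<forall>x\<in>C. norm x \<le> R" by (meson bounded_pos)
  then show ?thesis by (intro exI[of _ R]) auto
qed

definition rr where "rr = (SOME r. r > 0 \<and> cball 0 r \<subseteq> C)"
definition RR where "RR = (SOME R. R > 0 \<and> C \<subseteq> cball 0 R)"
lemma rr: "rr > 0" "cball 0 rr \<subseteq> C" using someI_ex[OF ex_r] unfolding rr_def by auto
lemma RR: "RR > 0" "C \<subseteq> cball 0 RR" using someI_ex[OF ex_R] unfolding RR_def by auto

lemma zeroC: "0 \<in> C" using rr by auto

abbreviation "N \<equiv> normC C"

definition Sx where "Sx x = {t. t > 0 \<and> x \<in> (\<lambda>y. t *\<^sub>R y) ` C}"

lemma N_def': "N x = Inf (Sx x)" unfolding normC_def Sx_def by simp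

lemma Sx_iff: "t \<in> Sx x \<longleftrightarrow> t > 0 \<and> x /\<^sub>R t \<in> C"
proof
  assume "t \<in> Sx x" then show "t > 0 \<and> x /\<^sub>R t \<in> C" unfolding Sx_def by auto
next
  assume a: "t > 0 \<and> x /\<^sub>R t \<in> C"
  then have "x = t *\<^sub>R (x /\<^sub>R t)" by simp
  then show "t \<in> Sx x" using a unfolding Sx_def by blast
qed

lemma Sx_ne: "Sx x \<noteq> {}"
proof -
  define t where "t = norm x / rr + 1"
  have "norm x / rr \<ge> 0" using rr by simp
  then have t: "t > 0" by (simp add: t_def)
  have "norm x \<le> rr * t" using rr by (simp add: t_def field_simps)
  then have "norm (x /\<^sub>R t) \<le> rr" using t by (simp add: field_simps)
  then have "x /\<^sub>R t \<in> C" using rr by auto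
  then show ?thesis using t Sx_iff by blast
qed

lemma Sx_bdd: "bdd_below (Sx x)"
  by (rule bdd_belowI[of _ 0]) (auto simp: Sx_iff)

lemma Sx_up: assumes "t \<in> Sx x" "t \<le> s" shows "s \<in> Sx x"
proof -
  have t: "t > 0" "x /\<^sub>R t \<in> C" using assms Sx_iff by auto
  have s: "s > 0" using t assms by auto
  have "(t/s) *\<^sub>R (x /\<^sub>R t) + (1 - t/s) *\<^sub>R 0 \<in> C"
    using convexD[OF cvx t(2) zeroC, of "t/s" "1 - t/s"] t s assms by simp
  moreover have "(t/s) *\<^sub>R (x /\<^sub>R t) + (1 - t/s) *\<^sub>R 0 = x /\<^sub>R s" using t s by (simp add: inverse_eq_divide)
  ultimately show ?thesis using s Sx_iff by auto
qed

lemma N_nonneg: "N x \<ge> 0"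
  unfolding N_def' by (rule cInf_greatest[OF Sx_ne]) (auto simp: Sx_iff)

lemma N_le_iff: assumes "s > 0" shows "N x \<le> s \<longleftrightarrow> x /\<^sub>R s \<in> C"
proof
  assume "x /\<^sub>R s \<in> C"
  then have "s \<in> Sx x" using assms Sx_iff by auto
  then show "N x \<le> s" unfolding N_def' by (rule cInf_lower[OF _ Sx_bdd])
next
  assume a: "N x \<le> s"
  have in_t: "t \<in> Sx x" if "t > s" for t
  proof -
    have "Inf (Sx x) < t" using a that N_def' by auto
    then obtain u where "u \<in> Sx x" "u < t" using cInf_less_iff[OF Sx_ne Sx_bdd] by auto
    then show ?thesis using Sx_up by auto
  qed
  define f where "f n = x /\<^sub>R (s + inverse (real (Suc n)))" for n
  have "f n \<in> C" for n
    using in_t[of "s + inverse (real (Suc n))"] Sx_iff unfolding f_def by auto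
  moreover have "f \<longlonglongrightarrow> x /\<^sub>R s"
    unfolding f_def using assms
    by (intro tendsto_intros LIMSEQ_inverse_real_of_nat_add) auto
  ultimately show "x /\<^sub>R s \<in> C" using closed_sequentially[OF clo] by blast
qed

lemma eq_by_le:
  fixes a b :: real
  assumes "a \<ge> 0" "b \<ge> 0" "\<And>s. s > 0 \<Longrightarrow> a \<le> s \<longleftrightarrow> b \<le> s"
  shows "a = b"
proof (rule ccontr)
  assume "a \<noteq> b"
  then consider "a < b" | "b < a" by linarith
  then show False
  proof cases
    case 1
    then show False using assms(3)[of "(a+b)/2"] assms(1,2) by auto
  next
    case 2
    then show False using assms(3)[of "(a+b)/2"] assms(1,2) by auto
  qed
qed

lemma N_zero: "N 0 = 0"
  using eq_by_le[OF N_nonneg order_refl, of 0] N_le_iff zeroC by auto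

lemma N_scale: assumes "c \<ge> 0" shows "N (c *\<^sub>R x) = c * N x"
proof (cases "c = 0")
  case True then show ?thesis by (simp add: N_zero)
next
  case False
  then have c: "c > 0" using assms by auto
  show ?thesis
  proof (rule eq_by_le[OF N_nonneg])
    show "0 \<le> c * N x" using c N_nonneg by simp
    fix s :: real assume s: "s > 0"
    have "N (c *\<^sub>R x) \<le> s \<longleftrightarrow> (c *\<^sub>R x) /\<^sub>R s \<in> C" using N_le_iff s by blast
    also have "(c *\<^sub>R x) /\<^sub>R s = x /\<^sub>R (s / c)" using c by (simp add: field_simps)
    also have "\<dots> \<in> C \<longleftrightarrow> N x \<le> s / c" using N_le_iff s c by simp
    also have "\<dots> \<longleftrightarrow> c * N x \<le> s" using c by (simp add: field_simps)
    finally show "N (c *\<^sub>R x) \<le> s \<longleftrightarrow> c * N x \<le> s" .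
  qed
qed

lemma N_neg: "N (- x) = N x"
proof (rule eq_by_le[OF N_nonneg N_nonneg])
  fix s :: real assume s: "s > 0"
  have "(- x) /\<^sub>R s = - (x /\<^sub>R s)" by simp
  then show "N (- x) \<le> s \<longleftrightarrow> N x \<le> s"
    using N_le_iff[OF s, of "-x"] N_le_iff[OF s, of x] symm by (metis minus_minus)
qed

lemma N_triangle: "N (x + y) \<le> N x + N y"
proof (rule field_le_epsilon)
  fix e :: real assume e: "e > 0"
  define s where "s = N x + e/2"
  define t where "t = N y + e/2"
  have st: "s > 0" "t > 0" using N_nonneg e by (auto simp: s_def t_def add_nonneg_pos)
  have "N x \<le> s" "N y \<le> t" using e by (auto simp: s_def t_def)
  then have xs: "x /\<^sub>R s \<in> C" and yt: "y /\<^sub>R t \<in> C" using N_le_iff st by auto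
  have "(s/(s+t)) *\<^sub>R (x /\<^sub>R s) + (t/(s+t)) *\<^sub>R (y /\<^sub>R t) \<in> C"
    using convexD[OF cvx xs yt, of "s/(s+t)" "t/(s+t)"] st by (simp add: add_divide_distrib[symmetric])
  moreover have "(s/(s+t)) *\<^sub>R (x /\<^sub>R s) + (t/(s+t)) *\<^sub>R (y /\<^sub>R t) = (x + y) /\<^sub>R (s + t)"
    using st by (simp add: scaleR_add_right inverse_eq_divide)
  ultimately have "N (x + y) \<le> s + t" using N_le_iff[of "s+t"] st by simp
  then show "N (x + y) \<le> N x + N y + e" by (simp add: s_def t_def)
qed

lemma N_upper: "N x \<le> norm x / rr"
proof (cases "x = 0")
  case True then show ?thesis by (simp add: N_zero)
next
  case False
  then have s: "norm x / rr > 0" using rr by simp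
  have "norm (x /\<^sub>R (norm x / rr)) = rr" using False rr by simp
  then have "x /\<^sub>R (norm x / rr) \<in> C" using rr by auto
  then show ?thesis using N_le_iff[OF s] by simp
qed

lemma N_lower: "norm x / RR \<le> N x"
proof (rule ccontr)
  define q where "q = norm x / RR"
  assume a: "\<not> norm x / RR \<le> N x"
  then have q1: "N x < q" unfolding q_def by auto
  define s where "s = (N x + q) / 2"
  have "N x + q > 0" using q1 N_nonneg[of x] by linarith
  then have s1: "s > 0" unfolding s_def by simp
  have s2: "N x \<le> s" using q1 unfolding s_def by (simp add: field_simps)
  have s3: "s < q" using q1 unfolding s_def by (simp add: field_simps)
  note s = s1 s2 s3
  then have "x /\<^sub>R s \<in> C" using N_le_iff by auto
  then have "norm (x /\<^sub>R s) \<le> RR" using RR by auto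
  then have "norm x \<le> RR * s" using s by (simp add: field_simps)
  then have "norm x / RR \<le> s" using RR by (simp add: field_simps)
  then show False using s q_def by simp
qed

lemma N_pos: "x \<noteq> 0 \<Longrightarrow> N x > 0"
  using N_lower[of x] RR by (metis divide_pos_pos zero_less_norm_iff order_less_le_trans)

lemma N_lip: "\<bar>N x - N y\<bar> \<le> norm (x - y) / rr"
proof -
  have "N x \<le> N (x - y) + N y" using N_triangle[of "x - y" y] by simp
  moreover have "N y \<le> N (y - x) + N x" using N_triangle[of "y - x" x] by simp
  moreover have "N (y - x) = N (x - y)" using N_neg[of "x - y"] by simp
  moreover have "N (x - y) \<le> norm (x - y) / rr" by (rule N_upper)
  ultimately show ?thesis by linarith
qed

lemma N_cont: "continuous_on UNIV N"
proof (rule lipschitz_on_continuous_on)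
  show "(1/rr)-lipschitz_on UNIV N"
    by (rule lipschitz_onI) (use N_lip rr in \<open>auto simp: dist_norm dist_real_def\<close>)
qed

lemma C_iff: "x \<in> C \<longleftrightarrow> N x \<le> 1" using N_le_iff[of 1] by simp

end


lemma hyp_eq:
  fixes a b :: "'a::real_inner"
  assumes "{y. a \<bullet> y = 1} = {y. b \<bullet> y = 1}" "a \<noteq> 0"
  shows "a = b"
proof -
  have aa: "a \<bullet> a > 0" using assms(2) by simp
  have "a \<bullet> (a /\<^sub>R (a \<bullet> a)) = 1" using aa by (simp add: inner_commute)
  then have "b \<bullet> (a /\<^sub>R (a \<bullet> a)) = 1" using assms(1) by blast
  then have ba: "b \<bullet> a = a \<bullet> a" using aa by (simp add: field_simps)
  then have "b \<noteq> 0" using aa by auto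
  then have bb: "b \<bullet> b > 0" by simp
  have "b \<bullet> (b /\<^sub>R (b \<bullet> b)) = 1" using bb by (simp add: inner_commute)
  then have "a \<bullet> (b /\<^sub>R (b \<bullet> b)) = 1" using assms(1) by blast
  then have ab: "a \<bullet> b = b \<bullet> b" using bb by (simp add: field_simps)
  have "(a - b) \<bullet> (a - b) = a \<bullet> a - 2 * (a \<bullet> b) + b \<bullet> b"
    by (simp add: inner_diff_left inner_diff_right inner_commute)
  also have "\<dots> = 0" using ab ba by (simp add: inner_commute)
  finally show ?thesis by simp
qed

lemma deriv_from_subgrad:
  fixes f :: "'a::real_inner \<Rightarrow> real"
  assumes sub: "\<And>x y. phi x \<bullet> (y - x) \<le> f y - f x" and cont: "isCont phi x"
  shows "(f has_derivative (\<lambda>h. phi x \<bullet> h)) (at x)"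
  unfolding has_derivative_at'
proof (intro conjI allI impI)
  show "bounded_linear (\<lambda>h. phi x \<bullet> h)" by (rule bounded_linear_inner_right)
  fix e :: real assume e: "e > 0"
  then obtain d where d: "d > 0" "\<And>x'. dist x' x < d \<Longrightarrow> dist (phi x') (phi x) < e"
    using cont unfolding continuous_at_eps_delta by blast
  show "\<exists>d>0. \<forall>x'. 0 < norm (x' - x) \<and> norm (x' - x) < d \<longrightarrow>
           norm (f x' - f x - phi x \<bullet> (x' - x)) / norm (x' - x) < e"
  proof (intro exI[of _ d] conjI allI impI)
    show "d > 0" by fact
    fix x' assume x': "0 < norm (x' - x) \<and> norm (x' - x) < d"
    define r where "r = f x' - f x - phi x \<bullet> (x' - x)"
    have r0: "0 \<le> r" using sub[of x x'] unfolding r_def by simp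
    have "phi x' \<bullet> (x - x') \<le> f x - f x'" by (rule sub)
    then have "f x' - f x \<le> phi x' \<bullet> (x' - x)"
      by (metis inner_minus_right minus_diff_eq neg_le_iff_le minus_diff_eq)
    then have "r \<le> (phi x' - phi x) \<bullet> (x' - x)" unfolding r_def by (simp add: inner_diff_left)
    also have "\<dots> \<le> norm (phi x' - phi x) * norm (x' - x)" by (rule norm_cauchy_schwarz)
    also have "\<dots> < e * norm (x' - x)"
      using d(2)[of x'] x' by (intro mult_strict_right_mono) (auto simp: dist_norm)
    finally have "r < e * norm (x' - x)" .
    then show "norm r / norm (x' - x) < e" using r0 x' by (simp add: field_simps)
  qed
qed

context csb
begin

definition dual where "dual x l \<longleftrightarrow> (\<forall>y. l \<bullet> y \<le> N y) \<and> l \<bullet> x = N x"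

lemma dual_bound: assumes "dual x l" shows "norm l \<le> 1 / rr"
proof (cases "l = 0")
  case True then show ?thesis using rr by simp
next
  case False
  have "l \<bullet> l \<le> N l" using assms dual_def by auto
  also have "\<dots> \<le> norm l / rr" by (rule N_upper)
  finally have "norm l * norm l \<le> norm l / rr" by (simp add: dot_square_norm power2_eq_square)
  then have h: "norm l * norm l \<le> norm l * (1 / rr)" by simp
  have pos: "norm l > 0" using False by simp
  show ?thesis using h mult_le_cancel_left_pos[OF pos] by metis
qed

lemma unit_pt: assumes "x \<noteq> 0" shows "N (x /\<^sub>R N x) = 1"
proof -
  have "N (inverse (N x) *\<^sub>R x) = inverse (N x) * N x"
    using N_scale[of "inverse (N x)" x] N_nonneg by simp
  then show ?thesis using N_pos[OF assms] by simp
qed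

lemma not_interior: assumes "N z = 1" shows "z \<notin> interior C"
proof
  assume "z \<in> interior C"
  then obtain e where e: "e > 0" "ball z e \<subseteq> C" by (meson mem_interior)
  have z0: "z \<noteq> 0" using assms N_zero by auto
  define w where "w = (1 + e / (2 * norm z)) *\<^sub>R z"
  have "dist z w = e / 2" using z0 e by (simp add: w_def dist_norm algebra_simps)
  then have "w \<in> C" using e by auto
  then have "N w \<le> 1" using C_iff by auto
  moreover have "N w = 1 + e / (2 * norm z)"
    unfolding w_def using N_scale[of "1 + e / (2 * norm z)" z] assms e by simp
  moreover have "e / (2 * norm z) > 0" using e z0 by simp
  ultimately show False by linarith
qed

lemma frontier_pt: assumes "N z = 1" shows "z \<in> frontier C"
  using not_interior[OF assms] assms C_iff clo by (simp add: frontier_def closure_closed)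

lemma dual_exists: "\<exists>l. dual x l"
proof (cases "x = 0")
  case True
  then show ?thesis by (intro exI[of _ 0]) (simp add: dual_def N_zero N_nonneg)
next
  case False
  define z where "z = x /\<^sub>R N x"
  have Nz: "N z = 1" unfolding z_def by (rule unit_pt[OF False])
  have "z \<in> closure C" using Nz C_iff clo by (simp add: closure_closed)
  moreover have "z \<notin> rel_interior C"
  proof -
    have "interior C \<noteq> {}" using body unfolding cs_convex_body_def by auto
    then show ?thesis using not_interior[OF Nz] rel_interior_nonempty_interior by auto
  qed
  ultimately obtain a where a: "a \<noteq> 0" "\<And>y. y \<in> closure C \<Longrightarrow> a \<bullet> z \<le> a \<bullet> y"
    using supporting_hyperplane_relative_frontier[OF cvx] by metis
  define b where "b = - a"
  have b0: "b \<noteq> 0" using a b_def by auto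
  have bC: "b \<bullet> y \<le> b \<bullet> z" if "y \<in> C" for y
    using a(2)[of y] that closure_subset b_def by auto
  define y0 where "y0 = (rr / norm b) *\<^sub>R b"
  have "norm y0 = rr" using b0 rr by (simp add: y0_def)
  then have "y0 \<in> C" using rr by auto
  then have "b \<bullet> y0 \<le> b \<bullet> z" by (rule bC)
  moreover have "b \<bullet> y0 = rr * norm b"
    using b0 by (simp add: y0_def dot_square_norm power2_eq_square)
  moreover have "rr * norm b > 0" using rr b0 by simp
  ultimately have bz: "b \<bullet> z > 0" by linarith
  define m where "m = b /\<^sub>R (b \<bullet> z)"
  have mz: "m \<bullet> z = 1" using bz by (simp add: m_def)
  have mC: "m \<bullet> y \<le> 1" if "y \<in> C" for y
    using bC[OF that] bz by (simp add: m_def field_simps)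
  have "dual x m" unfolding dual_def
  proof (intro conjI allI)
    fix y
    show "m \<bullet> y \<le> N y"
    proof (cases "y = 0")
      case True then show ?thesis by (simp add: N_zero)
    next
      case False
      have "N y > 0" using N_pos[OF False] .
      then have "y /\<^sub>R N y \<in> C" using N_le_iff[of "N y" y] by simp
      then have "m \<bullet> (y /\<^sub>R N y) \<le> 1" by (rule mC)
      then show ?thesis using \<open>N y > 0\<close> by (simp add: field_simps)
    qed
  next
    have "x = N x *\<^sub>R z" using N_pos[OF False] by (simp add: z_def)
    then have "m \<bullet> x = N x * (m \<bullet> z)" by (metis inner_scaleR_right)
    then show "m \<bullet> x = N x" using mz by simp
  qed
  then show ?thesis by blast
qed

lemma dual_unique:
  assumes sm: "smooth_body C" and x: "x \<noteq> 0" and l1: "dual x l1" and l2: "dual x l2"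
  shows "l1 = l2"
proof -
  define z where "z = x /\<^sub>R N x"
  have Nz: "N z = 1" unfolding z_def by (rule unit_pt[OF x])
  have fz: "z \<in> frontier C" by (rule frontier_pt[OF Nz])
  have supp: "supporting_hyperplane C z {y. l \<bullet> y = 1}" if l: "dual x l" for l
  proof -
    have lz: "l \<bullet> z = 1" using l N_pos[OF x] by (simp add: z_def dual_def)
    have "l \<noteq> 0" using lz by auto
    moreover have "\<forall>y\<in>C. l \<bullet> y \<le> 1"
      using l C_iff unfolding dual_def by (meson order_trans)
    ultimately show ?thesis unfolding supporting_hyperplane_def using lz
      by (intro exI[of _ l] exI[of _ 1]) auto
  qed
  have "\<exists>!H. supporting_hyperplane C z H" using sm fz unfolding smooth_body_def by blast
  then have "{y. l1 \<bullet> y = 1} = {y. l2 \<bullet> y = 1}" using supp[OF l1] supp[OF l2] by blast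
  moreover have "l1 \<noteq> 0"
    using l1 N_pos[OF x] by (auto simp: dual_def)
  ultimately show ?thesis by (rule hyp_eq)
qed

definition G where "G x = (if x = 0 then 0 else (THE l. dual x l))"

lemma G_dual: assumes sm: "smooth_body C" shows "dual x (G x)"
proof (cases "x = 0")
  case True then show ?thesis by (simp add: G_def dual_def N_zero N_nonneg)
next
  case False
  have "\<exists>!l. dual x l" using dual_exists dual_unique[OF sm False] by blast
  then show ?thesis using False theI' by (simp add: G_def) (metis theI')
qed

lemma G_eq: "smooth_body C \<Longrightarrow> x \<noteq> 0 \<Longrightarrow> dual x l \<Longrightarrow> G x = l"
  using G_dual dual_unique by blast

lemma G_bound: "smooth_body C \<Longrightarrow> norm (G x) \<le> 1 / rr"
  using G_dual dual_bound by blast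

lemma dual_closed: "closed {z::'a \<times> 'a. dual (fst z) (snd z)}"
proof -
  have eq: "{z::'a \<times> 'a. dual (fst z) (snd z)} =
     (\<Inter>y. {z. snd z \<bullet> y \<le> N y}) \<inter> {z. snd z \<bullet> fst z = N (fst z)}"
    unfolding dual_def by auto
  have cN: "continuous_on UNIV (\<lambda>z::'a \<times> 'a. N (fst z))"
    by (rule continuous_on_compose2[OF N_cont continuous_on_fst]) (auto intro: continuous_on_id)
  show ?thesis unfolding eq
    by (intro closed_Int closed_INT ballI closed_Collect_le closed_Collect_eq cN
        continuous_intros)
qed

lemma G_cont: assumes sm: "smooth_body C" shows "continuous_on (- {0}) G"
proof -
  let ?T = "cball (0::'a) (1 / rr)"
  have fim: "G \<in> (- {0}) \<rightarrow> ?T" using G_bound[OF sm] by auto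
  have eq: "(\<lambda>x. (x, G x)) ` (- {0}) = ((- {0}) \<times> ?T) \<inter> {z. dual (fst z) (snd z)}"
  proof
    show "(\<lambda>x. (x, G x)) ` (- {0}) \<subseteq> ((- {0}) \<times> ?T) \<inter> {z. dual (fst z) (snd z)}"
      using G_bound[OF sm] G_dual[OF sm] by auto
    show "((- {0}) \<times> ?T) \<inter> {z. dual (fst z) (snd z)} \<subseteq> (\<lambda>x. (x, G x)) ` (- {0})"
    proof
      fix z assume z: "z \<in> ((- {0}) \<times> ?T) \<inter> {z. dual (fst z) (snd z)}"
      then have "fst z \<noteq> 0" "dual (fst z) (snd z)" by auto
      then have "G (fst z) = snd z" using G_eq[OF sm] by auto
      then show "z \<in> (\<lambda>x. (x, G x)) ` (- {0})" using z
        by (auto intro!: image_eqI[of _ _ "fst z"] simp: prod_eq_iff)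
    qed
  qed
  show ?thesis
    unfolding continuous_closed_graph_eq[OF compact_cball fim] eq
    by (rule closedin_closed_Int[OF dual_closed])
qed

definition phi where "phi x = N x *\<^sub>R G x"

lemma phi_cont: assumes sm: "smooth_body C" shows "isCont phi x"
proof (cases "x = 0")
  case False
  have "isCont G x" using G_cont[OF sm] False
    using continuous_on_eq_continuous_at[of "- {0}" G] by auto
  moreover have "isCont N x" using N_cont continuous_on_eq_continuous_at[of UNIV N] by auto
  ultimately show ?thesis unfolding phi_def[abs_def] by (intro continuous_intros)
next
  case True
  have "phi 0 = 0" by (simp add: phi_def N_zero)
  have "(phi \<longlongrightarrow> 0) (at 0)"
  proof (rule Lim_null_comparison)
    show "\<forall>\<^sub>F y in at 0. norm (phi y) \<le> norm y / rr * (1 / rr)"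
    proof (intro always_eventually allI)
      fix y
      have "norm (phi y) = N y * norm (G y)" using N_nonneg by (simp add: phi_def)
      also have "\<dots> \<le> norm y / rr * (1 / rr)"
        using N_upper G_bound[OF sm] N_nonneg rr by (intro mult_mono) auto
      finally show "norm (phi y) \<le> norm y / rr * (1 / rr)" .
    qed
    have "((\<lambda>y. norm y / rr * (1 / rr)) \<longlongrightarrow> norm (0::'a) / rr * (1 / rr)) (at (0::'a))"
      using rr by (intro tendsto_intros) auto
    then show "((\<lambda>y. norm y / rr * (1 / rr)) \<longlongrightarrow> 0) (at (0::'a))" by simp
  qed
  then show ?thesis using True \<open>phi 0 = 0\<close> by (simp add: isCont_def)
qed

lemma g_sub: assumes sm: "smooth_body C"
  shows "phi x \<bullet> (y - x) \<le> (N y)\<^sup>2 / 2 - (N x)\<^sup>2 / 2"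
proof -
  have d: "dual x (G x)" by (rule G_dual[OF sm])
  have "phi x \<bullet> (y - x) = N x * (G x \<bullet> y - G x \<bullet> x)"
    by (simp add: phi_def inner_diff_right right_diff_distrib)
  also have "G x \<bullet> x = N x" using d dual_def by auto
  also have "N x * (G x \<bullet> y - N x) \<le> N x * (N y - N x)"
    using d N_nonneg by (intro mult_left_mono) (auto simp: dual_def)
  also have "\<dots> \<le> (N y)\<^sup>2 / 2 - (N x)\<^sup>2 / 2"
  proof -
    have "0 \<le> (N y - N x)\<^sup>2" by simp
    then show ?thesis by (simp add: power2_eq_square algebra_simps)
  qed
  finally show ?thesis .
qed

lemma g_deriv: assumes sm: "smooth_body C"
  shows "((\<lambda>x. (N x)\<^sup>2 / 2) has_derivative (\<lambda>h. phi x \<bullet> h)) (at x)"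
  by (rule deriv_from_subgrad[OF g_sub[OF sm] phi_cont[OF sm]])

lemma phi_cont_on: "smooth_body C \<Longrightarrow> continuous_on UNIV phi"
  using phi_cont continuous_at_imp_continuous_on by blast

end


definition Dm :: "('a::euclidean_space \<Rightarrow> 'a) \<Rightarrow> ('v::finite \<times> 'v) set \<Rightarrow> 'a ^ 'v \<Rightarrow> 'a ^ 'v \<Rightarrow> real ^ ('v \<times> 'v)" where
  "Dm ph E q h = (\<Sum>e\<in>E. (ph (q $ fst e - q $ snd e) \<bullet> (h $ fst e - h $ snd e)) *\<^sub>R axis e 1)"

lemma edge_fun_sum:
  "edge_fun C E q = (\<Sum>e\<in>E. ((normC C (q $ fst e - q $ snd e))\<^sup>2 / 2) *\<^sub>R axis e (1::real))"
proof -
  have fin: "finite E" by simp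
  show ?thesis
  proof (rule vec_eq_iff[THEN iffD2], rule allI)
    fix i
    have "(\<Sum>e\<in>E. ((normC C (q $ fst e - q $ snd e))\<^sup>2 / 2) *\<^sub>R axis e (1::real)) $ i
       = (\<Sum>e\<in>E. (if e = i then (normC C (q $ fst e - q $ snd e))\<^sup>2 / 2 else 0))"
      unfolding sum_component by (intro sum.cong refl) (simp add: axis_def)
    also have "\<dots> = (if i \<in> E then (normC C (q $ fst i - q $ snd i))\<^sup>2 / 2 else 0)"
      using fin by (simp add: sum.delta')
    finally show "edge_fun C E q $ i = (\<Sum>e\<in>E. ((normC C (q $ fst e - q $ snd e))\<^sup>2 / 2) *\<^sub>R axis e (1::real)) $ i"
      by (simp add: edge_fun_def)
  qed
qed

lemma Dm_linear: "bounded_linear (Dm ph E q)"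
  unfolding Dm_def
  by (intro bounded_linear_sum bounded_linear_scaleR_const bounded_linear_inner_right_comp
      bounded_linear_sub bounded_linear_vec_nth)

lemma Dm_diff_bound:
  fixes ph :: "'a::euclidean_space \<Rightarrow> 'a" and E :: "('v::finite \<times> 'v) set"
  shows "norm (Dm ph E q x - Dm ph E p x) \<le>
     (\<Sum>e\<in>E. 2 * norm (ph (q $ fst e - q $ snd e) - ph (p $ fst e - p $ snd e))) * norm x"
proof -
  have fin: "finite E" by simp
  have "Dm ph E q x - Dm ph E p x =
     (\<Sum>e\<in>E. ((ph (q $ fst e - q $ snd e) - ph (p $ fst e - p $ snd e)) \<bullet> (x $ fst e - x $ snd e)) *\<^sub>R axis e 1)"
    unfolding Dm_def by (simp add: sum_subtractf inner_diff_left scaleR_left_diff_distrib)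
  also have "norm \<dots> \<le> (\<Sum>e\<in>E. norm (((ph (q $ fst e - q $ snd e) - ph (p $ fst e - p $ snd e)) \<bullet> (x $ fst e - x $ snd e)) *\<^sub>R (axis e 1 :: real ^ ('v \<times> 'v))))"
    by (rule norm_sum)
  also have "\<dots> \<le> (\<Sum>e\<in>E. 2 * norm (ph (q $ fst e - q $ snd e) - ph (p $ fst e - p $ snd e)) * norm x)"
  proof (rule sum_mono)
    fix e assume "e \<in> E"
    let ?a = "ph (q $ fst e - q $ snd e) - ph (p $ fst e - p $ snd e)"
    let ?b = "x $ fst e - x $ snd e"
    have "norm ((?a \<bullet> ?b) *\<^sub>R (axis e 1 :: real ^ ('v \<times> 'v))) = \<bar>?a \<bullet> ?b\<bar>"
      by (simp add: norm_axis_1)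
    also have "\<dots> \<le> norm ?a * norm ?b" by (rule Cauchy_Schwarz_ineq2)
    also have "norm ?b \<le> 2 * norm x"
      using norm_triangle_ineq4[of "x $ fst e" "x $ snd e"] Finite_Cartesian_Product.norm_nth_le[of x "fst e"] Finite_Cartesian_Product.norm_nth_le[of x "snd e"]
      by linarith
    then have "norm ?a * norm ?b \<le> norm ?a * (2 * norm x)" by (intro mult_left_mono) auto
    finally show "norm ((?a \<bullet> ?b) *\<^sub>R (axis e 1 :: real ^ ('v \<times> 'v))) \<le> 2 * norm ?a * norm x"
      by (simp add: algebra_simps)
  qed
  also have "\<dots> = (\<Sum>e\<in>E. 2 * norm (ph (q $ fst e - q $ snd e) - ph (p $ fst e - p $ snd e))) * norm x"
    by (simp add: sum_distrib_right)
  finally show ?thesis .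
qed

context csb
begin

lemma edge_deriv:
  fixes E :: "('v::finite \<times> 'v) set"
  assumes sm: "smooth_body C"
  shows "(edge_fun C E has_derivative Dm phi E q) (at q)"
proof -
  have "((\<lambda>q. \<Sum>e\<in>E. ((N (q $ fst e - q $ snd e))\<^sup>2 / 2) *\<^sub>R axis e (1::real)) has_derivative
        (\<lambda>h. \<Sum>e\<in>E. (phi (q $ fst e - q $ snd e) \<bullet> (h $ fst e - h $ snd e)) *\<^sub>R axis e 1)) (at q)"
  proof (rule has_derivative_sum, rule has_derivative_scaleR_left)
    fix e :: "'v \<times> 'v"
    have lin: "((\<lambda>q::'a^'v. q $ fst e - q $ snd e) has_derivative (\<lambda>h. h $ fst e - h $ snd e)) (at q)"
      by (rule bounded_linear_imp_has_derivative[OF bounded_linear_sub[OF bounded_linear_vec_nth bounded_linear_vec_nth]])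
    show "((\<lambda>q. (N (q $ fst e - q $ snd e))\<^sup>2 / 2) has_derivative
           (\<lambda>h. phi (q $ fst e - q $ snd e) \<bullet> (h $ fst e - h $ snd e))) (at q)"
      using has_derivative_compose[OF lin g_deriv[OF sm]] .
  qed
  moreover have "edge_fun C E = (\<lambda>q. \<Sum>e\<in>E. ((N (q $ fst e - q $ snd e))\<^sup>2 / 2) *\<^sub>R axis e (1::real))"
    by (rule ext, rule edge_fun_sum)
  moreover have "Dm phi E q = (\<lambda>h. \<Sum>e\<in>E. (phi (q $ fst e - q $ snd e) \<bullet> (h $ fst e - h $ snd e)) *\<^sub>R axis e 1)"
    by (rule ext) (simp only: Dm_def)
  ultimately show ?thesis by simp
qed

lemma rank_eq:
  fixes E :: "('v::finite \<times> 'v) set"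
  assumes sm: "smooth_body C"
  shows "rigidity_rank C E q = dim (range (Dm phi E q))"
proof -
  have "Dm phi E q = frechet_derivative (edge_fun C E) (at q)"
    by (rule frechet_derivative_at[OF edge_deriv[OF sm]])
  then show ?thesis unfolding rigidity_rank_def by simp
qed

lemma rank_lsc:
  fixes E :: "('v::finite \<times> 'v) set"
  assumes sm: "smooth_body C"
  shows "\<exists>d>0. \<forall>q. dist q p < d \<longrightarrow> dim (range (Dm phi E p)) \<le> dim (range (Dm phi E q))"
proof -
  let ?D = "Dm phi E"
  define K where "K = {h. ?D p h = 0}"
  define Kp where "Kp = {y. \<forall>x\<in>K. orthogonal x y}"
  have linp: "linear (?D p)" using Dm_linear bounded_linear.linear by blast
  have subK: "subspace K" unfolding K_def by (rule linear_subspace_kernel[OF linp])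
  have spK: "span K = K" using subK by (simp add: span_eq_iff)
  have subKp: "subspace Kp" unfolding Kp_def by (rule subspace_orthogonal_to_vectors)
  have spKp: "span Kp = Kp" using subKp by (simp add: span_eq_iff)
  have clKp: "closed Kp" using subKp by (rule closed_subspace)
  have rng: "range (?D p) = ?D p ` Kp"
  proof
    show "range (?D p) \<subseteq> ?D p ` Kp"
    proof
      fix u assume "u \<in> range (?D p)"
      then obtain h where h: "u = ?D p h" by auto
      obtain y z where yz: "y \<in> span K" "\<And>w. w \<in> span K \<Longrightarrow> orthogonal z w" "h = y + z"
        using orthogonal_subspace_decomp_exists[of K h] by metis
      have "y \<in> K" using yz(1) spK by simp
      then have "?D p y = 0" by (simp add: K_def)
      then have "u = ?D p z" using h yz(3) linear_add[OF linp] by simp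
      moreover have "z \<in> Kp" using yz(2) spK unfolding Kp_def by (auto simp: orthogonal_commute)
      ultimately show "u \<in> ?D p ` Kp" by blast
    qed
  qed auto
  have inj0: "\<forall>x\<in>Kp. ?D p x = 0 \<longrightarrow> x = 0"
  proof (intro ballI impI)
    fix x assume "x \<in> Kp" "?D p x = 0"
    then have "x \<in> K" "x \<in> Kp" unfolding K_def by auto
    then have "orthogonal x x" unfolding Kp_def by auto
    then show "x = 0" by (simp add: orthogonal_def)
  qed
  obtain c where c: "c > 0" "\<And>x. x \<in> Kp \<Longrightarrow> c * norm x \<le> norm (?D p x)"
    using injective_imp_isometric[OF clKp subKp Dm_linear inj0] by blast
  define M where "M q = (\<Sum>e\<in>E. 2 * norm (phi (q $ fst e - q $ snd e) - phi (p $ fst e - p $ snd e)))" for q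
  have cph: "continuous_on UNIV (\<lambda>q::'a^'v. phi (q $ a - q $ b))" for a b
  proof (rule continuous_on_compose2[OF phi_cont_on[OF sm]])
    show "continuous_on UNIV (\<lambda>q::'a^'v. q $ a - q $ b)"
      by (intro linear_continuous_on bounded_linear_sub bounded_linear_vec_nth)
  qed auto
  have contM: "continuous_on UNIV M"
    unfolding M_def
    by (intro continuous_on_sum continuous_on_mult_left continuous_on_norm continuous_on_diff
        continuous_on_const cph)
  then have "isCont M p" using continuous_on_eq_continuous_at[of UNIV M] by auto
  moreover have "M p = 0" by (simp add: M_def)
  ultimately obtain d where d: "d > 0" "\<And>q. dist q p < d \<Longrightarrow> dist (M q) 0 < c"
    using c(1) unfolding continuous_at_eps_delta by metis
  show ?thesis
  proof (intro exI[of _ d] conjI allI impI)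
    show "d > 0" by fact
    fix q assume q: "dist q p < d"
    have Mq: "M q < c" using d(2)[OF q] by auto
    have linq: "linear (?D q)" using Dm_linear bounded_linear.linear by blast
    have z: "x = 0" if "x \<in> Kp" "?D q x = 0" for x
    proof (rule ccontr)
      assume "x \<noteq> 0"
      then have nx: "norm x > 0" by simp
      have "c * norm x \<le> norm (?D p x)" using c(2) that(1) by blast
      also have "\<dots> = norm (?D q x - ?D p x)" using that(2) by simp
      also have "\<dots> \<le> M q * norm x" unfolding M_def by (rule Dm_diff_bound)
      finally have "c * norm x \<le> M q * norm x" .
      then have "c \<le> M q" using nx by simp
      then show False using Mq by simp
    qed
    have injq: "inj_on (?D q) (span Kp)"
    proof (rule inj_onI)
      fix x y assume xy: "x \<in> span Kp" "y \<in> span Kp" "?D q x = ?D q y"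
      have "x - y \<in> Kp" using xy(1,2) spKp subKp by (simp add: subspace_diff)
      moreover have "?D q (x - y) = 0" using xy(3) linear_diff[OF linq] by simp
      ultimately have "x - y = 0" using z by blast
      then show "x = y" by simp
    qed
    have injp: "inj_on (?D p) (span Kp)"
    proof (rule inj_onI)
      fix x y assume xy: "x \<in> span Kp" "y \<in> span Kp" "?D p x = ?D p y"
      have "x - y \<in> Kp" using xy(1,2) spKp subKp by (simp add: subspace_diff)
      moreover have "?D p (x - y) = 0" using xy(3) linear_diff[OF linp] by simp
      ultimately have "x - y = 0" using inj0 by blast
      then show "x = y" by simp
    qed
    have "dim (range (?D p)) = dim Kp" unfolding rng by (rule dim_image_eq[OF linp injp])
    also have "\<dots> = dim (?D q ` Kp)" by (rule dim_image_eq[OF linq injq, symmetric])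
    also have "\<dots> \<le> dim (range (?D q))" by (rule dim_subset) auto
    finally show "dim (range (?D p)) \<le> dim (range (?D q))" .
  qed
qed

end

theorem proposition2p6:
  fixes C :: "'a::euclidean_space set" and E :: "('v::finite \<times> 'v) set" and p :: "'a ^ 'v"
  assumes "cs_convex_body C" and "smooth_body C"
    and "simple_graph E"
    and "regular_fw C E p"
  shows "constant_fw C E p"
proof -
  interpret csb C by (unfold_locales) (rule assms(1))
  note sm = assms(2)
  define W where "W = (\<Inter>e\<in>E. {q::'a^'v. q $ fst e \<noteq> q $ snd e})"
  have openW: "open W" unfolding W_def
  proof (intro open_INT ballI)
    show "finite E" by simp
    fix e :: "'v \<times> 'v"
    show "open {q::'a^'v. q $ fst e \<noteq> q $ snd e}"
      by (intro open_Collect_neq linear_continuous_on bounded_linear_vec_nth)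
  qed
  have wpW: "well_positioned C E q" if "q \<in> W" for q
    unfolding well_positioned_def
  proof (intro conjI allI impI)
    fix v w assume "(v, w) \<in> E"
    then show "q $ v \<noteq> q $ w" using that unfolding W_def by auto
  next
    show "edge_fun C E differentiable (at q)" using edge_deriv[OF sm] by (rule differentiableI)
  qed
  have pW: "p \<in> W" using assms(4) unfolding regular_fw_def well_positioned_def W_def by auto
  obtain d where d: "d > 0" "\<And>q. dist q p < d \<Longrightarrow> dim (range (Dm phi E p)) \<le> dim (range (Dm phi E q))"
    using rank_lsc[OF sm, of p E] by blast
  show ?thesis unfolding constant_fw_def
  proof (intro exI[of _ "W \<inter> ball p d"] conjI ballI)
    show "open (W \<inter> ball p d)" using openW by auto
    show "p \<in> W \<inter> ball p d" using pW d(1) by auto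
    fix q assume q: "q \<in> W \<inter> ball p d"
    show wq: "well_positioned C E q" using q wpW by auto
    have "rigidity_rank C E q \<le> rigidity_rank C E p" using assms(4) wq unfolding regular_fw_def by auto
    moreover have "rigidity_rank C E p \<le> rigidity_rank C E q"
    proof -
      have "dist q p < d" using q by (auto simp: dist_commute)
      then show ?thesis using d(2)[of q] rank_eq[OF sm, of E p] rank_eq[OF sm, of E q] by simp
    qed
    ultimately show "rigidity_rank C E q = rigidity_rank C E p" by simp
  qed
qed

end
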